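(* Let $G$ be a finite graph and $\mathbf{Y}=\lim_{z\to\infty}\mathbf{Y}(z)\in[0,\infty]^{\vec E}$ (a monotone limit). Then $\mathbf{Y}$ is the smallest solution in $[0,\infty]^{\vec E}$ of the fixed point equation $\mathbf{Y}=\mathcal{Q}_G(\mathcal{R}_G(\mathbf{Y}))$.
   Context: $\vec E$: directed edges; $\partial u$: neighbours of $u$; empty sums are $0$. $\mathbf{Y}(z)\in(0,\infty)^{\vec E}$ is the unique solution of $Y_{u\to v}=z/(1+\sum_{w\in\partial u\setminus v}Y_{w\to u})$ (the limit of LABP), and it is non-decreasing in $z$. $\mathcal{R}_G:[0,\infty]^{\vec E}\to[0,1]^{\vec E}$ is $\mathcal{R}_{u\to v}(\mathbf{Y})=1/(1+\sum_{w\in\partial u\setminus v}Y_{w\to u})$, with value $0$ if some $Y_{w\to u}=\infty$, $w\in\partial u\setminus v$. $\mathcal{Q}_G:[0,1]^{\vec E}\to(0,\infty]^{\vec E}$ is $\mathcal{Q}_{u\to v}(\mathbf{X})=1/\sum_{w\in\partial u\setminus v}X_{w\to u}$ with $1/0=\infty$ (so $\mathcal{Q}_{u\to v}(\mathbf{X})=\infty$ if all these $X_{w\to u}$ are $0$ or the sum is empty). Order is componentwise. *)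

theory Defs
  imports "HOL-Analysis.Analysis" "HOL-Library.Extended_Nonnegative_Real"
begin

(* Since E is symmetric, E itself is the set of directed edges \<rightarrow>E:
   (u,v) \<in> E represents the directed edge u\<rightarrow>v. *)
definition finite_graph :: "'a set \<Rightarrow> ('a \<times> 'a) set \<Rightarrow> bool" where
  "finite_graph V E \<longleftrightarrow> finite V \<and> E \<subseteq> V \<times> V \<and> sym E \<and> (\<forall>u. (u,u) \<notin> E)"

definition nbrs :: "('a \<times> 'a) set \<Rightarrow> 'a \<Rightarrow> 'a set" where
  "nbrs E u = {w. (u,w) \<in> E}"

(* Vectors are functions on pairs; off \<rightarrow>E they are fixed to 0. *)
definition LABP_sol :: "('a \<times> 'a) set \<Rightarrow> real \<Rightarrow> ('a \<times> 'a \<Rightarrow> real) \<Rightarrow> bool" where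
  "LABP_sol E z Y \<longleftrightarrow>
     (\<forall>u v. (u,v) \<in> E \<longrightarrow> 0 < Y (u,v) \<and>
        Y (u,v) = z / (1 + (\<Sum>w\<in>nbrs E u - {v}. Y (w,u)))) \<and>
     (\<forall>e. e \<notin> E \<longrightarrow> Y e = 0)"

definition Yz :: "('a \<times> 'a) set \<Rightarrow> real \<Rightarrow> ('a \<times> 'a \<Rightarrow> real)" where
  "Yz E z = (THE Y. LABP_sol E z Y)"

definition RG :: "('a \<times> 'a) set \<Rightarrow> ('a \<times> 'a \<Rightarrow> ennreal) \<Rightarrow> ('a \<times> 'a \<Rightarrow> ennreal)" where
  "RG E Y = (\<lambda>(u,v).
     if (\<exists>w\<in>nbrs E u - {v}. Y (w,u) = \<infinity>) then 0
     else 1 / (1 + (\<Sum>w\<in>nbrs E u - {v}. Y (w,u))))"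

definition QG :: "('a \<times> 'a) set \<Rightarrow> ('a \<times> 'a \<Rightarrow> ennreal) \<Rightarrow> ('a \<times> 'a \<Rightarrow> ennreal)" where
  "QG E X = (\<lambda>(u,v).
     if (\<Sum>w\<in>nbrs E u - {v}. X (w,u)) = 0 then \<infinity>
     else 1 / (\<Sum>w\<in>nbrs E u - {v}. X (w,u)))"

end

theory Submission
  imports Defs
begin


lemma inv_antimono_enn: assumes xy: "(x::ennreal) \<le> y" shows "inverse y \<le> inverse x"
proof (cases x rule: ennreal_cases)
  case (real r)
  show ?thesis
  proof (cases "r = 0")
    case True then show ?thesis using real by simp
  next
    case False
    then have r: "r > 0" using real by simp
    show ?thesis
    proof (cases y rule: ennreal_cases)
      case (real s)
      with xy \<open>x = ennreal r\<close> r have "r \<le> s" by (simp add: ennreal_le_iff)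
      then show ?thesis using real \<open>x = ennreal r\<close> r
        by (simp add: inverse_ennreal le_imp_inverse_le ennreal_leI)
    qed simp
  qed
next
  case top
  then show ?thesis using xy by (simp add: top_unique)
qed

lemma tendsto_inverse_enn:
  fixes f :: "'b \<Rightarrow> ennreal"
  assumes "(f \<longlongrightarrow> l) F" shows "((\<lambda>x. inverse (f x)) \<longlongrightarrow> inverse l) F"
proof -
  have "continuous_on UNIV (\<lambda>x::ennreal. inverse x)"
    by (intro continuous_on_inverse_ennreal continuous_on_id)
  then show ?thesis using continuous_on_tendsto_compose[OF _ assms, of UNIV] by auto
qed

lemma inv_z_tendsto: "((\<lambda>z::real. inverse (ennreal z)) \<longlongrightarrow> 0) at_top"
proof -
  have "((\<lambda>z::real. ennreal (inverse z)) \<longlongrightarrow> ennreal 0) at_top"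
    by (intro tendsto_ennrealI tendsto_inverse_0_at_top filterlim_ident)
  moreover have "\<forall>\<^sub>F z in at_top. ennreal (inverse z) = inverse (ennreal z)"
    using eventually_gt_at_top[of "0::real"] by eventually_elim (simp add: inverse_ennreal)
  ultimately show ?thesis by (simp add: tendsto_cong)
qed

lemma key_min:
  fixes z :: real and A :: ennreal
  assumes z: "z > 0"
  shows "ennreal z * inverse (1 + ennreal z * A) \<le> inverse A"
proof (cases A rule: ennreal_cases)
  case (real r)
  show ?thesis
  proof (cases "r = 0")
    case True then show ?thesis using real by simp
  next
    case False
    then have r: "r > 0" using real by simp
    have "ennreal z * inverse (1 + ennreal z * A) = ennreal (z * inverse (1 + z * r))"
      using real r z by (simp add: ennreal_mult[symmetric] inverse_ennreal add_pos_pos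
          flip: ennreal_plus ennreal_1)
    also have "\<dots> \<le> ennreal (inverse r)"
    proof (rule ennreal_leI)
      have "z * inverse (1 + z * r) = z / (1 + z*r)" by (simp add: field_simps)
      also have "\<dots> \<le> z / (z * r)" using z r by (intro divide_left_mono) (simp_all add: mult_pos_pos add_pos_pos)
      also have "\<dots> = inverse r" using z by (simp add: field_simps)
      finally show "z * inverse (1 + z * r) \<le> inverse r" .
    qed
    also have "\<dots> = inverse A" using real r by (simp add: inverse_ennreal)
    finally show ?thesis .
  qed
next
  case top
  then show ?thesis using z by (simp add: ennreal_mult_top)
qed

lemma key_lim:
  fixes z :: real and B :: ennreal
  assumes z: "z > 0"
  shows "ennreal z * inverse (1 + ennreal z * B) = inverse (inverse (ennreal z) + B)"
proof (cases B rule: ennreal_cases)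
  case (real r)
  have "ennreal z * inverse (1 + ennreal z * B) = ennreal (z * inverse (1 + z * r))"
    using real z by (simp add: ennreal_mult[symmetric] inverse_ennreal add_pos_nonneg
        flip: ennreal_plus ennreal_1)
  also have "\<dots> = ennreal (inverse (inverse z + r))"
    using z real by (simp add: field_simps)
  also have "\<dots> = inverse (inverse (ennreal z) + B)"
    using real z by (simp add: inverse_ennreal add_pos_nonneg flip: ennreal_plus)
  finally show ?thesis .
next
  case top
  then show ?thesis using z by (simp add: ennreal_mult_top)
qed



lemma ratio_core:
  fixes a b a' b' :: "'a \<times> 'a \<Rightarrow> real" and z :: real
  assumes fin: "finite E" and nbfin: "\<And>u. finite (nbrs E u)"
    and sy: "\<And>u w. (u,w) \<in> E \<Longrightarrow> (w,u) \<in> E"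
    and z: "z > 0"
    and pa: "\<And>e. e \<in> E \<Longrightarrow> a e > 0" and pb: "\<And>e. e \<in> E \<Longrightarrow> b e > 0"
    and pa': "\<And>e. e \<in> E \<Longrightarrow> a' e \<ge> 0" and pb': "\<And>e. e \<in> E \<Longrightarrow> b' e \<ge> 0"
    and ha: "\<And>u v. (u,v) \<in> E \<Longrightarrow> a (u,v) = z / (1 + (\<Sum>w\<in>nbrs E u - {v}. a' (w,u)))"
    and hb: "\<And>u v. (u,v) \<in> E \<Longrightarrow> b (u,v) = z / (1 + (\<Sum>w\<in>nbrs E u - {v}. b' (w,u)))"
    and ha': "\<And>u v. (u,v) \<in> E \<Longrightarrow> a' (u,v) = z / (1 + (\<Sum>w\<in>nbrs E u - {v}. a (w,u)))"
    and hb': "\<And>u v. (u,v) \<in> E \<Longrightarrow> b' (u,v) = z / (1 + (\<Sum>w\<in>nbrs E u - {v}. b (w,u)))"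
    and e: "e \<in> E"
  shows "a e \<le> b e"
proof (rule ccontr)
  assume "\<not> a e \<le> b e"
  then have ae: "a e / b e > 1" using pb[OF e] by simp
  define c where "c = Max ((\<lambda>e. a e / b e) ` E)"
  have "a e / b e \<le> c" unfolding c_def using fin e by (intro Max_ge) auto
  with ae have c1: "c > 1" by simp
  have "c \<in> (\<lambda>e. a e / b e) ` E" unfolding c_def using fin e by (intro Max_in) auto
  then obtain u v where uv: "(u,v) \<in> E" and cuv: "c = a (u,v) / b (u,v)" by auto
  have le: "a e \<le> c * b e" if "e \<in> E" for e
  proof -
    have "a e / b e \<le> c" unfolding c_def using fin that by (intro Max_ge) auto
    then show ?thesis using pb[OF that] by (simp add: divide_le_eq mult.commute)
  qed
  have inE: "(x,w) \<in> E" if "x \<in> nbrs E w" for x w using that sy by (auto simp: nbrs_def)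
  have step: "b' (w,u) / c \<le> a' (w,u)" if w: "w \<in> nbrs E u - {v}" for w
  proof -
    have wu: "(w,u) \<in> E" using w inE by auto
    define Sa where "Sa = (\<Sum>x\<in>nbrs E w - {u}. a (x,w))"
    define Sb where "Sb = (\<Sum>x\<in>nbrs E w - {u}. b (x,w))"
    have Sb0: "Sb \<ge> 0" unfolding Sb_def using pb inE by (intro sum_nonneg) (auto intro: less_imp_le)
    have "Sa \<le> (\<Sum>x\<in>nbrs E w - {u}. c * b (x,w))" unfolding Sa_def
      using le inE by (intro sum_mono) auto
    also have "\<dots> = c * Sb" unfolding Sb_def by (simp add: sum_distrib_left)
    finally have SaSb: "Sa \<le> c * Sb" .
    have Sa0: "Sa \<ge> 0" unfolding Sa_def using pa inE by (intro sum_nonneg) (auto intro: less_imp_le)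
    have "b' (w,u) / c = z / (c * (1 + Sb))" using hb'[OF wu] unfolding Sb_def by simp
    also have "\<dots> \<le> z / (1 + c * Sb)"
      using z c1 Sb0 by (intro divide_left_mono) (auto simp: algebra_simps intro: add_pos_nonneg)
    also have "\<dots> \<le> z / (1 + Sa)"
      using z SaSb Sa0 by (intro divide_left_mono) auto
    also have "\<dots> = a' (w,u)" using ha'[OF wu] unfolding Sa_def by simp
    finally show ?thesis .
  qed
  define Ta where "Ta = (\<Sum>w\<in>nbrs E u - {v}. a' (w,u))"
  define Tb where "Tb = (\<Sum>w\<in>nbrs E u - {v}. b' (w,u))"
  have Tb0: "Tb \<ge> 0" unfolding Tb_def using pb' inE by (intro sum_nonneg) auto
  have "Tb / c = (\<Sum>w\<in>nbrs E u - {v}. b' (w,u) / c)" unfolding Tb_def by (simp add: sum_divide_distrib)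
  also have "\<dots> \<le> Ta" unfolding Ta_def using step by (intro sum_mono) auto
  finally have TaTb: "Tb / c \<le> Ta" .
  have "a (u,v) = z / (1 + Ta)" using ha[OF uv] unfolding Ta_def by simp
  also have "\<dots> \<le> z / (1 + Tb / c)"
  proof -
    have "Tb / c \<ge> 0" using Tb0 c1 by simp
    then show ?thesis using z TaTb by (intro divide_left_mono) (auto intro!: mult_pos_pos)
  qed
  also have "\<dots> = c * z / (c + Tb)" using c1 by (simp add: field_simps)
  also have "\<dots> < c * z / (1 + Tb)"
    using c1 z Tb0 by (intro divide_strict_left_mono) (auto intro: add_pos_nonneg)
  also have "\<dots> = c * b (u,v)" using hb[OF uv] unfolding Tb_def by simp
  also have "\<dots> = a (u,v)" using cuv pb[OF uv] by simp
  finally show False by simp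
qed



definition Te :: "('a \<times> 'a) set \<Rightarrow> real \<Rightarrow> ('a \<times> 'a \<Rightarrow> ennreal) \<Rightarrow> ('a \<times> 'a \<Rightarrow> ennreal)" where
  "Te E z y = (\<lambda>(u,v). if (u,v) \<in> E then ennreal z * inverse (1 + (\<Sum>w\<in>nbrs E u - {v}. y (w,u))) else 0)"

definition az :: "('a \<times> 'a) set \<Rightarrow> real \<Rightarrow> ('a \<times> 'a \<Rightarrow> ennreal)" where
  "az E z = lfp (\<lambda>y. Te E z (Te E z y))"

lemma Te_anti: assumes "x \<le> y" shows "Te E z y \<le> Te E z x"
  unfolding le_fun_def
proof
  fix e :: "'a \<times> 'a"
  obtain u v where e: "e = (u,v)" by (cases e)
  have "(\<Sum>w\<in>nbrs E u - {v}. x (w,u)) \<le> (\<Sum>w\<in>nbrs E u - {v}. y (w,u))"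
    using assms by (intro sum_mono) (simp add: le_fun_def)
  then have "inverse (1 + (\<Sum>w\<in>nbrs E u - {v}. y (w,u))) \<le> inverse (1 + (\<Sum>w\<in>nbrs E u - {v}. x (w,u)))"
    by (intro inv_antimono_enn add_left_mono)
  then have "ennreal z * inverse (1 + (\<Sum>w\<in>nbrs E u - {v}. y (w,u))) \<le> ennreal z * inverse (1 + (\<Sum>w\<in>nbrs E u - {v}. x (w,u)))"
    by (rule mult_left_mono) simp
  then show "Te E z y e \<le> Te E z x e" unfolding Te_def e by simp
qed

lemma Te_mono2: "mono (\<lambda>y. Te E z (Te E z y))"
  by (rule monoI) (intro Te_anti)

lemma graph_facts:
  assumes "finite_graph V E"
  shows "finite E" "\<And>u. finite (nbrs E u)" "\<And>u w. (u,w) \<in> E \<Longrightarrow> (w,u) \<in> E"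
    "\<And>x w. x \<in> nbrs E w \<Longrightarrow> (x,w) \<in> E"
proof -
  have V: "finite V" "E \<subseteq> V \<times> V" "sym E" using assms unfolding finite_graph_def by simp_all
  show "finite E" using V(1,2) finite_subset finite_cartesian_product by blast
  show "finite (nbrs E u)" for u
  proof (rule finite_subset[OF _ V(1)])
    show "nbrs E u \<subseteq> V" using V(2) unfolding nbrs_def by blast
  qed
  show sy: "(w,u) \<in> E" if "(u,w) \<in> E" for u w using V(3) that by (rule symD)
  show "(x,w) \<in> E" if "x \<in> nbrs E w" for x w using that sy unfolding nbrs_def by blast
qed

lemma RG_eq:
  assumes "finite (nbrs E u)"
  shows "RG E Y (u,v) = inverse (1 + (\<Sum>w\<in>nbrs E u - {v}. Y (w,u)))"
  using assms by (auto simp: RG_def divide_ennreal_def ennreal_sum_eq_top)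

lemma QG_eq: "QG E X (u,v) = inverse (\<Sum>w\<in>nbrs E u - {v}. X (w,u))"
  by (auto simp: QG_def divide_ennreal_def)

lemma Te_fin: "z > 0 \<Longrightarrow> Te E z y e < top"
proof -
  assume z: "z > 0"
  obtain u v where e: "e = (u,v)" by (cases e)
  have "inverse (1 + (\<Sum>w\<in>nbrs E u - {v}. y (w,u))) \<le> inverse 1"
    by (intro inv_antimono_enn) simp
  then have "ennreal z * inverse (1 + (\<Sum>w\<in>nbrs E u - {v}. y (w,u))) \<le> ennreal z * 1"
    by (intro mult_left_mono) auto
  then have "ennreal z * inverse (1 + (\<Sum>w\<in>nbrs E u - {v}. y (w,u))) < top"
    by (rule le_less_trans) simp
  then show ?thesis unfolding Te_def e by simp
qed

lemma Te_conv:
  assumes G: "finite_graph V E" and z: "z > 0" and fin: "\<And>e. e \<in> E \<Longrightarrow> y e < top"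
    and uv: "(u,v) \<in> E"
  shows "Te E z y (u,v) = ennreal (z / (1 + (\<Sum>w\<in>nbrs E u - {v}. enn2real (y (w,u)))))"
proof -
  note gf = graph_facts[OF G]
  have "(\<Sum>w\<in>nbrs E u - {v}. y (w,u)) = (\<Sum>w\<in>nbrs E u - {v}. ennreal (enn2real (y (w,u))))"
    using fin gf(4) by (intro sum.cong) auto
  also have "\<dots> = ennreal (\<Sum>w\<in>nbrs E u - {v}. enn2real (y (w,u)))" by simp
  finally have s: "(\<Sum>w\<in>nbrs E u - {v}. y (w,u)) = ennreal (\<Sum>w\<in>nbrs E u - {v}. enn2real (y (w,u)))" .
  define S where "S = (\<Sum>w\<in>nbrs E u - {v}. enn2real (y (w,u)))"
  have S0: "S \<ge> 0" unfolding S_def by (intro sum_nonneg) simp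
  have "Te E z y (u,v) = ennreal z * inverse (ennreal (1 + S))"
    using uv s S0 unfolding Te_def S_def by (simp add: ennreal_plus)
  also have "\<dots> = ennreal z * ennreal (inverse (1 + S))"
    using S0 by (subst inverse_ennreal) auto
  also have "\<dots> = ennreal (z / (1 + S))"
    using S0 z by (subst ennreal_mult[symmetric]) (auto simp: divide_inverse)
  finally show ?thesis unfolding S_def .
qed

lemma Te_pos:
  assumes G: "finite_graph V E" and z: "z > 0" and fin: "\<And>e. e \<in> E \<Longrightarrow> y e < top"
    and uv: "(u,v) \<in> E"
  shows "Te E z y (u,v) > 0"
proof -
  have "(\<Sum>w\<in>nbrs E u - {v}. enn2real (y (w,u))) \<ge> 0" by (rule sum_nonneg) simp
  then have "z / (1 + (\<Sum>w\<in>nbrs E u - {v}. enn2real (y (w,u)))) > 0"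
    using z by simp
  then show ?thesis using Te_conv[OF assms] by simp
qed

lemma Te_zero: "e \<notin> E \<Longrightarrow> Te E z y e = 0"
  by (cases e) (auto simp: Te_def)




lemma Te_conv_real:
  assumes G: "finite_graph V E" and z: "z > 0" and fin: "\<And>e. e \<in> E \<Longrightarrow> y e < top"
    and uv: "(u,v) \<in> E"
  shows "enn2real (Te E z y (u,v)) = z / (1 + (\<Sum>w\<in>nbrs E u - {v}. enn2real (y (w,u))))"
proof -
  have "(\<Sum>w\<in>nbrs E u - {v}. enn2real (y (w,u))) \<ge> 0" by (rule sum_nonneg) simp
  then have "z / (1 + (\<Sum>w\<in>nbrs E u - {v}. enn2real (y (w,u)))) \<ge> 0" using z by simp
  then show ?thesis using Te_conv[OF assms] by simp
qed

lemma az_props: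
  assumes G: "finite_graph V E" and z: "z > 0"
  shows "Te E z (az E z) = az E z" "\<And>e. e \<in> E \<Longrightarrow> 0 < az E z e \<and> az E z e < top"
    "\<And>e. e \<notin> E \<Longrightarrow> az E z e = 0"
proof -
  note gf = graph_facts[OF G]
  define a where "a = az E z"
  have aF: "a = Te E z (Te E z a)" unfolding a_def az_def by (rule lfp_unfold[OF Te_mono2])
  define b where "b = Te E z a"
  have bF: "Te E z (Te E z b) = b" unfolding b_def using aF by simp
  have ab: "a \<le> b" unfolding a_def az_def using bF by (intro lfp_lowerbound) simp
  have afin: "a e < top" for e using aF Te_fin[OF z] by metis
  have bfin: "b e < top" for e unfolding b_def using Te_fin[OF z] by metis
  have tafin: "Te E z a e < top" for e using Te_fin[OF z] by metis
  have apos: "a e > 0" if "e \<in> E" for e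
  proof -
    obtain u v where e: "e = (u,v)" by (cases e)
    have "Te E z (Te E z a) (u,v) > 0" using Te_pos[OF G z tafin] that e by simp
    then show ?thesis using aF e by simp
  qed
  have bpos: "b e > 0" if "e \<in> E" for e
  proof -
    obtain u v where e: "e = (u,v)" by (cases e)
    show ?thesis unfolding b_def e using Te_pos[OF G z afin] that e by simp
  qed
  define ar where "ar = (\<lambda>e. enn2real (a e))"
  define br where "br = (\<lambda>e. enn2real (b e))"
  have arE: "ar (u,v) = z / (1 + (\<Sum>w\<in>nbrs E u - {v}. br (w,u)))" if "(u,v) \<in> E" for u v
  proof -
    have "ar (u,v) = enn2real (Te E z b (u,v))" unfolding ar_def b_def using aF by metis
    also have "\<dots> = z / (1 + (\<Sum>w\<in>nbrs E u - {v}. br (w,u)))"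
      unfolding br_def by (rule Te_conv_real[OF G z bfin that])
    finally show ?thesis .
  qed
  have brE: "br (u,v) = z / (1 + (\<Sum>w\<in>nbrs E u - {v}. ar (w,u)))" if "(u,v) \<in> E" for u v
    unfolding br_def b_def ar_def by (rule Te_conv_real[OF G z afin that])
  have arp: "ar e > 0" if "e \<in> E" for e
    unfolding ar_def using apos[OF that] afin[of e] by (simp add: enn2real_positive_iff)
  have brp: "br e > 0" if "e \<in> E" for e
    unfolding br_def using bpos[OF that] bfin[of e] by (simp add: enn2real_positive_iff)
  have eq: "a e = b e" if "e \<in> E" for e
  proof -
    have "ar e \<le> br e"
      by (rule ratio_core[OF gf(1,2,3) z, of ar br br ar]) (use arp brp arE brE that in \<open>auto intro: less_imp_le\<close>)
    moreover have "br e \<le> ar e"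
      by (rule ratio_core[OF gf(1,2,3) z, of br ar ar br]) (use arp brp arE brE that in \<open>auto intro: less_imp_le\<close>)
    ultimately have "ar e = br e" by simp
    then have "ennreal (ar e) = ennreal (br e)" by simp
    then show ?thesis unfolding ar_def br_def using afin[of e] bfin[of e] by simp
  qed
  have a0: "a e = 0" if "e \<notin> E" for e using aF Te_zero[OF that] by metis
  have "a = b"
  proof
    fix e show "a e = b e"
      by (cases "e \<in> E") (simp_all add: eq a0 b_def Te_zero)
  qed
  then show "Te E z (az E z) = az E z" unfolding a_def b_def by simp
  show "\<And>e. e \<in> E \<Longrightarrow> 0 < az E z e \<and> az E z e < top" using apos afin unfolding a_def by blast
  show "\<And>e. e \<notin> E \<Longrightarrow> az E z e = 0" using a0 unfolding a_def by blast
qed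

lemma Yz_az:
  assumes G: "finite_graph V E" and z: "z > 0"
  shows "Yz E z = (\<lambda>e. enn2real (az E z e))"
proof -
  note gf = graph_facts[OF G]
  note ap = az_props[OF G z]
  define yr where "yr = (\<lambda>e. enn2real (az E z e))"
  have fin: "az E z e < top" if "e \<in> E" for e using ap(2)[OF that] by blast
  have yrE: "yr (u,v) = z / (1 + (\<Sum>w\<in>nbrs E u - {v}. yr (w,u)))" if "(u,v) \<in> E" for u v
  proof -
    have "yr (u,v) = enn2real (Te E z (az E z) (u,v))" unfolding yr_def using ap(1) by simp
    also have "\<dots> = z / (1 + (\<Sum>w\<in>nbrs E u - {v}. yr (w,u)))"
      unfolding yr_def by (rule Te_conv_real[OF G z fin that])
    finally show ?thesis .
  qed
  have yrp: "yr e > 0" if "e \<in> E" for e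
    unfolding yr_def using ap(2)[OF that] by (simp add: enn2real_positive_iff)
  have sol: "LABP_sol E z yr"
    unfolding LABP_sol_def using yrE yrp ap(3) unfolding yr_def by auto
  have uniq: "Y = yr" if "LABP_sol E z Y" for Y
  proof
    fix e
    have YE: "\<And>u v. (u,v) \<in> E \<Longrightarrow> Y (u,v) = z / (1 + (\<Sum>w\<in>nbrs E u - {v}. Y (w,u)))"
      and Yp: "\<And>e. e \<in> E \<Longrightarrow> Y e > 0" and Y0: "\<And>e. e \<notin> E \<Longrightarrow> Y e = 0"
      using that unfolding LABP_sol_def by auto
    show "Y e = yr e"
    proof (cases "e \<in> E")
      case True
      have "Y e \<le> yr e"
        by (rule ratio_core[OF gf(1,2,3) z, of Y yr Y yr]) (use Yp yrp YE yrE True in \<open>auto intro: less_imp_le\<close>)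
      moreover have "yr e \<le> Y e"
        by (rule ratio_core[OF gf(1,2,3) z, of yr Y yr Y]) (use Yp yrp YE yrE True in \<open>auto intro: less_imp_le\<close>)
      ultimately show ?thesis by simp
    next
      case False then show ?thesis using Y0 ap(3) unfolding yr_def by simp
    qed
  qed
  have "Yz E z = yr" unfolding Yz_def using sol uniq by (rule the_equality)
  then show ?thesis unfolding yr_def .
qed




theorem mainTheorem12:
  fixes V :: "'a set" and E :: "('a \<times> 'a) set" and Y :: "'a \<times> 'a \<Rightarrow> ennreal"
  assumes G: "finite_graph V E"
    and lim: "\<And>e. e \<in> E \<Longrightarrow> ((\<lambda>z. ennreal (Yz E z e)) \<longlongrightarrow> Y e) at_top"
  shows "(\<forall>e\<in>E. Y e = QG E (RG E Y) e) \<and>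
         (\<forall>Y' :: 'a \<times> 'a \<Rightarrow> ennreal. (\<forall>e\<in>E. Y' e = QG E (RG E Y') e) \<longrightarrow> (\<forall>e\<in>E. Y e \<le> Y' e))"
proof -
  note gf = graph_facts[OF G]
  have limaz: "((\<lambda>z. az E z e) \<longlongrightarrow> Y e) at_top" if e: "e \<in> E" for e
  proof -
    have "\<forall>\<^sub>F z in at_top. ennreal (Yz E z e) = az E z e"
      using eventually_gt_at_top[of "0::real"]
    proof eventually_elim
      case (elim z)
      then show ?case using Yz_az[OF G elim] az_props(2)[OF G elim e] by simp
    qed
    then show ?thesis using lim[OF e] by (simp add: tendsto_cong)
  qed
  have part1: "Y e = QG E (RG E Y) e" if e: "e \<in> E" for e
  proof -
    obtain u v where uv: "e = (u,v)" by (cases e)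
    have uvE: "(u,v) \<in> E" using e uv by simp
    define R where "R = (\<lambda>z. inverse (inverse (ennreal z) + (\<Sum>w\<in>nbrs E u - {v}. inverse (1 + (\<Sum>x\<in>nbrs E w - {u}. az E z (x,w))))))"
    have fixeq: "az E z (u,v) = R z" if z: "z > 0" for z
    proof -
      define a where "a = az E z"
      have aT: "Te E z a = a" unfolding a_def by (rule az_props(1)[OF G z])
      define B where "B = (\<Sum>w\<in>nbrs E u - {v}. inverse (1 + (\<Sum>x\<in>nbrs E w - {u}. a (x,w))))"
      have "(\<Sum>w\<in>nbrs E u - {v}. a (w,u)) = (\<Sum>w\<in>nbrs E u - {v}. ennreal z * inverse (1 + (\<Sum>x\<in>nbrs E w - {u}. a (x,w))))"
      proof (rule sum.cong)
        fix w assume "w \<in> nbrs E u - {v}"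
        then have "(w,u) \<in> E" using gf(4) by blast
        then show "a (w,u) = ennreal z * inverse (1 + (\<Sum>x\<in>nbrs E w - {u}. a (x,w)))"
        proof -
          have "a (w,u) = Te E z a (w,u)" using aT by simp
          then show ?thesis using \<open>(w,u) \<in> E\<close> unfolding Te_def by simp
        qed
      qed simp
      also have "\<dots> = ennreal z * B" unfolding B_def by (simp add: sum_distrib_left)
      finally have s: "(\<Sum>w\<in>nbrs E u - {v}. a (w,u)) = ennreal z * B" .
      have "a (u,v) = ennreal z * inverse (1 + (\<Sum>w\<in>nbrs E u - {v}. a (w,u)))"
      proof -
        have "a (u,v) = Te E z a (u,v)" using aT by simp
        then show ?thesis using uvE unfolding Te_def by simp
      qed
      also have "\<dots> = inverse (inverse (ennreal z) + B)" unfolding s by (rule key_lim[OF z])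
      finally show ?thesis unfolding R_def B_def a_def .
    qed
    have "(R \<longlongrightarrow> inverse (0 + (\<Sum>w\<in>nbrs E u - {v}. inverse (1 + (\<Sum>x\<in>nbrs E w - {u}. Y (x,w)))))) at_top"
      unfolding R_def
      by (intro tendsto_inverse_enn tendsto_add inv_z_tendsto tendsto_sum tendsto_const limaz gf(4)) auto
    moreover have "(R \<longlongrightarrow> Y (u,v)) at_top"
    proof -
      have "\<forall>\<^sub>F z in at_top. az E z (u,v) = R z"
        using eventually_gt_at_top[of "0::real"] by eventually_elim (rule fixeq)
      then show ?thesis using limaz[OF uvE] by (simp add: tendsto_cong)
    qed
    ultimately have "Y (u,v) = inverse (\<Sum>w\<in>nbrs E u - {v}. inverse (1 + (\<Sum>x\<in>nbrs E w - {u}. Y (x,w))))"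
      using tendsto_unique[OF trivial_limit_at_top_linorder] by fastforce
    also have "\<dots> = QG E (RG E Y) (u,v)"
      unfolding QG_eq using RG_eq[OF gf(2)] by simp
    finally show ?thesis using uv by simp
  qed
  have part2: "Y e \<le> Y' e" if fp: "\<forall>e\<in>E. Y' e = QG E (RG E Y') e" and e: "e \<in> E" for Y' e
  proof -
    have T2: "Te E z (Te E z Y') \<le> Y'" if z: "z > 0" for z
    proof (rule le_funI)
      fix e :: "'a \<times> 'a"
      obtain u v where uv: "e = (u,v)" by (cases e)
      show "Te E z (Te E z Y') e \<le> Y' e"
      proof (cases "(u,v) \<in> E")
        case False then show ?thesis using uv Te_zero[OF False, of z "Te E z Y'"] by simp
      next
        case True
        define A where "A = (\<Sum>w\<in>nbrs E u - {v}. inverse (1 + (\<Sum>x\<in>nbrs E w - {u}. Y' (x,w))))"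
        have "(\<Sum>w\<in>nbrs E u - {v}. Te E z Y' (w,u)) = (\<Sum>w\<in>nbrs E u - {v}. ennreal z * inverse (1 + (\<Sum>x\<in>nbrs E w - {u}. Y' (x,w))))"
        proof (rule sum.cong)
          fix w assume "w \<in> nbrs E u - {v}"
          then have "(w,u) \<in> E" using gf(4) by blast
          then show "Te E z Y' (w,u) = ennreal z * inverse (1 + (\<Sum>x\<in>nbrs E w - {u}. Y' (x,w)))"
            unfolding Te_def by simp
        qed simp
        also have "\<dots> = ennreal z * A" unfolding A_def by (simp add: sum_distrib_left)
        finally have s: "(\<Sum>w\<in>nbrs E u - {v}. Te E z Y' (w,u)) = ennreal z * A" .
        have "Te E z (Te E z Y') e = ennreal z * inverse (1 + ennreal z * A)"
          using True uv s unfolding Te_def by simp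
        also have "\<dots> \<le> inverse A" by (rule key_min[OF z])
        also have "\<dots> = QG E (RG E Y') (u,v)"
          unfolding QG_eq A_def using RG_eq[OF gf(2)] by simp
        also have "\<dots> = Y' e" using fp True uv by simp
        finally show ?thesis .
      qed
    qed
    have "\<forall>\<^sub>F z in at_top. az E z e \<le> Y' e"
      using eventually_gt_at_top[of "0::real"]
    proof eventually_elim
      case (elim z)
      have "az E z \<le> Y'" unfolding az_def by (rule lfp_lowerbound) (rule T2[OF elim])
      then show ?case by (rule le_funD)
    qed
    then show ?thesis
      by (rule tendsto_upperbound[OF limaz[OF e]]) simp
  qed
  show ?thesis using part1 part2 by blast
qed


end
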